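(* Let $f\in\mathcal{R}$ with $f(z)=z+\sum_{n=2}^\infty a_nz^n$, and let $\Gamma_1=-\tfrac12 a_2$, $\Gamma_2=-\tfrac12\left(a_3-\tfrac32 a_2^2\right)$. Then $|\Gamma_1|\le\frac12$ and $|\Gamma_2|\le\frac{5}{12}$, and both bounds are attained by some $f\in\mathcal{R}$.
   Context: $\mathbb{D}$ is the open unit disk; $\mathcal{A}$ is the class of holomorphic $f$ on $\mathbb{D}$ with $f(0)=0$, $f'(0)=1$; $\mathcal{R}=\{f\in\mathcal{A}:\operatorname{Re} f'(z)>0\ \forall z\in\mathbb{D}\}$. $\Gamma_n$ are defined by $\log(f^{-1}(w)/w)=2\sum_{n\ge1}\Gamma_nw^n$. *)

theory Defs
  imports "HOL-Complex_Analysis.Complex_Analysis"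
begin

definition classA :: "(complex \<Rightarrow> complex) set" where
  "classA = {f. f holomorphic_on ball 0 1 \<and> f 0 = 0 \<and> deriv f 0 = 1}"

definition classR :: "(complex \<Rightarrow> complex) set" where
  "classR = {f \<in> classA. \<forall>z \<in> ball 0 1. Re (deriv f z) > 0}"

definition coeffA :: "(complex \<Rightarrow> complex) \<Rightarrow> nat \<Rightarrow> complex" where
  "coeffA f n = (deriv ^^ n) f 0 / of_nat (fact n)"

definition Gamma1 :: "(complex \<Rightarrow> complex) \<Rightarrow> complex" where
  "Gamma1 f = - (1/2) * coeffA f 2"

definition Gamma2 :: "(complex \<Rightarrow> complex) \<Rightarrow> complex" where
  "Gamma2 f = - (1/2) * (coeffA f 3 - (3/2) * (coeffA f 2)^2)"

end

theory Submission
  imports Defs "HOL-Complex_Analysis.Complex_Analysis"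
begin


lemma ev_ball: "z \<in> ball (0::complex) 1 \<Longrightarrow> (\<And>w. w \<in> ball 0 1 \<Longrightarrow> P w) \<Longrightarrow> eventually P (nhds z)"
  using eventually_nhds_in_open[of "ball 0 1" z] eventually_mono by (metis open_ball)

lemma deriv_lin:
  fixes w :: "complex \<Rightarrow> complex"
  assumes "\<And>z. norm z < 1 \<Longrightarrow> w z = \<alpha> * z"
  shows "deriv (deriv w) 0 = 0" and "deriv w 0 = \<alpha>"
proof -
  have d: "deriv w z = \<alpha>" if "z \<in> ball 0 1" for z
  proof -
    have "deriv w z = deriv (\<lambda>z. \<alpha> * z) z"
      by (rule deriv_cong_ev[OF ev_ball[OF that]]) (auto simp: assms)
    then show ?thesis by simp
  qed
  show "deriv w 0 = \<alpha>" using d by simp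
  have "deriv (deriv w) 0 = deriv (\<lambda>_. \<alpha>) 0"
    by (rule deriv_cong_ev[OF ev_ball]) (auto simp: d)
  then show "deriv (deriv w) 0 = 0" by simp
qed

lemma schwarz_coeff:
  assumes holw: "w holomorphic_on ball 0 1" and w0: "w 0 = 0"
    and wlt: "\<And>z. norm z < 1 \<Longrightarrow> norm (w z) < 1"
  shows "cmod (deriv (deriv w) 0) \<le> 2 * (1 - cmod (deriv w 0)^2)"
    and "cmod (deriv w 0) \<le> 1"
proof -
  note S = Schwarz_Lemma[OF holw w0 wlt]
  show "cmod (deriv w 0) \<le> 1" using S(2)[of 0] by simp
  obtain g where holg: "g holomorphic_on ball 0 1" and wg: "\<And>z. norm z < 1 \<Longrightarrow> w z = z * g z"
     and dg: "deriv w 0 = g 0"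
    by (rule Schwarz3[OF holw w0]) blast
  have holdg: "deriv g holomorphic_on ball 0 1" by (rule holomorphic_deriv[OF holg]) auto
  have dw: "deriv w z = g z + z * deriv g z" if "z \<in> ball 0 1" for z
  proof -
    have "deriv w z = deriv (\<lambda>z. z * g z) z"
      by (rule deriv_cong_ev[OF ev_ball[OF that]]) (auto simp: wg)
    also have "\<dots> = g z + z * deriv g z"
      by (rule DERIV_imp_deriv) (auto intro!: derivative_eq_intros holomorphic_derivI[OF holg _ that])
    finally show ?thesis .
  qed
  have ddw: "deriv (deriv w) 0 = 2 * deriv g 0"
  proof -
    have "deriv (deriv w) 0 = deriv (\<lambda>z. g z + z * deriv g z) 0"
      by (rule deriv_cong_ev[OF ev_ball]) (auto simp: dw)
    also have "\<dots> = 2 * deriv g 0"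
      by (rule DERIV_imp_deriv) (auto intro!: derivative_eq_intros holomorphic_derivI[OF holg] holomorphic_derivI[OF holdg])
    finally show ?thesis .
  qed
  define a where "a = g 0"
  show "cmod (deriv (deriv w) 0) \<le> 2 * (1 - cmod (deriv w 0)^2)"
  proof (cases "cmod a = 1")
    case True
    then obtain \<alpha> where "\<forall>z. norm z < 1 \<longrightarrow> w z = \<alpha> * z" using S(3) dg a_def by auto
    then have "deriv (deriv w) 0 = 0" using deriv_lin by blast
    then show ?thesis using True dg a_def by simp
  next
    case False
    then have alt: "cmod a < 1" using S(2)[of 0] dg a_def by simp
    have glt: "cmod (g z) < 1" if z: "norm z < 1" for z
    proof (cases "z = 0")
      case True then show ?thesis using alt a_def by simp
    next
      case False
      have ne: "cmod (w z) \<noteq> cmod z"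
      proof
        assume "cmod (w z) = cmod z"
        then obtain \<alpha> where "\<forall>z. norm z < 1 \<longrightarrow> w z = \<alpha> * z" "norm \<alpha> = 1" using S(3) z False by blast
        then have "deriv w 0 = \<alpha>" using deriv_lin by blast
        then show False using alt a_def dg \<open>norm \<alpha> = 1\<close> by simp
      qed
      have "cmod (w z) \<le> cmod z" using Schwarz_Lemma(1)[OF holw w0 wlt z] .
      then have "cmod (w z) < cmod z" using ne by simp
      then show ?thesis using wg[OF z] False by (simp add: norm_mult)
    qed
    have den: "1 - cnj a * g z \<noteq> 0" if "norm z < 1" for z
    proof
      assume "1 - cnj a * g z = 0"
      then have "cmod (cnj a * g z) = 1" by (metis norm_one right_minus_eq)
      moreover have "cmod (cnj a * g z) < 1" using alt glt[OF that]
        by (simp add: norm_mult) (metis mult_strict_mono' norm_ge_zero mult_1_right less_le_trans mult_le_one less_le)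
      ultimately show False by simp
    qed
    define h where "h z = (g z - a) / (1 - cnj a * g z)" for z
    have holh: "h holomorphic_on ball 0 1"
      unfolding h_def using den by (auto intro!: holomorphic_intros holg)
    have h0: "h 0 = 0" by (simp add: h_def a_def)
    have hlt: "norm (h z) < 1" if "norm z < 1" for z
      using Moebius_function_norm_lt_1[OF alt glt[OF that], of 0]
      by (simp add: h_def Moebius_function_simple)
    have "cmod (deriv h 0) \<le> 1" using Schwarz_Lemma(2)[OF holh h0 hlt, of 0] by simp
    have na: "1 - cnj a * a = of_real (1 - cmod a ^ 2)"
      using complex_norm_square[of a] by (simp add: mult.commute)
    have nz: "1 - cmod a ^ 2 > 0" using alt by (simp add: power_less_one_iff abs_less_iff)
    have ne1: "cnj a * a \<noteq> 1"
    proof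
      assume "cnj a * a = 1"
      then have "1 - cnj a * a = 0" by simp
      then show False unfolding na using nz by (metis less_irrefl of_real_eq_0_iff)
    qed
    have "deriv h 0 = (deriv g 0 * (1 - cnj a * a) + cnj a * deriv g 0 * (a - a)) / (1 - cnj a * a)^2"
      unfolding h_def
      by (rule DERIV_imp_deriv) (auto intro!: derivative_eq_intros holomorphic_derivI[OF holg] den[of 0, unfolded a_def[symmetric]] simp: a_def[symmetric] ne1 power2_eq_square)
    also have "\<dots> = deriv g 0 / (1 - cnj a * a)"
    proof -
      have "1 - cnj a * a \<noteq> 0" unfolding na using nz by (metis less_irrefl of_real_eq_0_iff)
      then show ?thesis by (simp add: power2_eq_square)
    qed
    also have "\<dots> = deriv g 0 / of_real (1 - cmod a ^ 2)" unfolding na ..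
    finally have dh: "deriv h 0 = deriv g 0 / of_real (1 - cmod a ^ 2)" .
    have "cmod (deriv h 0) = cmod (deriv g 0) / (1 - cmod a ^ 2)"
      unfolding dh norm_divide norm_of_real using nz by simp
    then have "cmod (deriv g 0) / (1 - cmod a ^ 2) \<le> 1"
      using \<open>cmod (deriv h 0) \<le> 1\<close> by simp
    then have "cmod (deriv g 0) \<le> 1 - cmod a ^ 2" using nz by (simp add: field_simps)
    then show ?thesis using ddw dg a_def by (simp add: norm_mult)
  qed
qed



lemma funpow23: "(deriv ^^ 2) f = deriv (deriv f)" "(deriv ^^ 3) f = deriv (deriv (deriv f))"
  by (simp_all add: numeral_2_eq_2 numeral_3_eq_3)

lemma upper:
  assumes "f \<in> classR"
  shows "cmod (Gamma1 f) \<le> 1/2 \<and> cmod (Gamma2 f) \<le> 5/12"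
proof -
  have holf: "f holomorphic_on ball 0 1" and f0: "f 0 = 0" and df0: "deriv f 0 = 1"
    and re: "\<And>z. z \<in> ball 0 1 \<Longrightarrow> Re (deriv f z) > 0"
    using assms by (auto simp: classR_def classA_def)
  define p where "p = deriv f"
  have holp: "p holomorphic_on ball 0 1" unfolding p_def by (rule holomorphic_deriv[OF holf]) auto
  have holdp: "deriv p holomorphic_on ball 0 1" by (rule holomorphic_deriv[OF holp]) auto
  have p0: "p 0 = 1" using df0 p_def by simp
  have rep: "Re (p z) > 0" if "z \<in> ball 0 1" for z using re[OF that] p_def by simp
  have pne: "p z + 1 \<noteq> 0" if "z \<in> ball 0 1" for z
  proof
    assume "p z + 1 = 0"
    then have "p z = -1" by (simp add: eq_neg_iff_add_eq_0)
    then have "Re (p z) = -1" by simp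
    then show False using rep[OF that] by simp
  qed
  define w where "w z = (p z - 1) / (p z + 1)" for z
  have holw: "w holomorphic_on ball 0 1" unfolding w_def using pne
    by (auto intro!: holomorphic_intros holp)
  have w0: "w 0 = 0" by (simp add: w_def p0)
  have wlt: "norm (w z) < 1" if "norm z < 1" for z
  proof -
    have zb: "z \<in> ball 0 1" using that by simp
    have "cmod (p z - 1)^2 < cmod (p z + 1)^2"
      unfolding cmod_power2 using rep[OF zb] by (simp add: power2_eq_square algebra_simps)
    then have "cmod (p z - 1) < cmod (p z + 1)" using power2_less_imp_less by fastforce
    then show ?thesis using pne[OF zb] by (simp add: w_def norm_divide divide_less_eq)
  qed
  have dw: "deriv w z = 2 * deriv p z / (p z + 1)^2" if "z \<in> ball 0 1" for z
  proof -
    have ne: "p z + 1 \<noteq> 0" "1 + p z \<noteq> 0" using pne[OF that] by (simp_all add: add.commute)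
    have "deriv w z = (deriv p z * (p z + 1) - (p z - 1) * deriv p z) / (p z + 1)^2"
      unfolding w_def
      by (rule DERIV_imp_deriv) (auto intro!: derivative_eq_intros holomorphic_derivI[OF holp _ that] ne
          simp: power2_eq_square)
    also have "\<dots> = 2 * deriv p z / (p z + 1)^2" by (simp add: algebra_simps)
    finally show ?thesis .
  qed
  define P1 where "P1 = deriv p 0"
  define P2 where "P2 = deriv (deriv p) 0"
  have W1: "deriv w 0 = P1 / 2" using dw[of 0] by (simp add: p0 P1_def)
  have "deriv (deriv w) 0 = deriv (\<lambda>z. 2 * deriv p z / (p z + 1)^2) 0"
    by (rule deriv_cong_ev[OF ev_ball]) (auto simp: dw)
  also have "\<dots> = (2 * P2 * (p 0 + 1)^2 - 2 * P1 * (2 * (p 0 + 1) * P1)) / ((p 0 + 1)^2)^2"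
    by (rule DERIV_imp_deriv) (auto intro!: derivative_eq_intros holomorphic_derivI[OF holp] holomorphic_derivI[OF holdp]
        simp: p0 P1_def P2_def)
  also have "\<dots> = P2 / 2 - P1^2 / 2" by (simp add: p0 power2_eq_square field_simps)
  finally have W2: "deriv (deriv w) 0 = P2 / 2 - P1^2 / 2" .
  note SC = schwarz_coeff[OF holw w0 wlt]
  have c2: "coeffA f 2 = P1 / 2" by (simp add: coeffA_def funpow23 P1_def p_def)
  have c3: "coeffA f 3 = P2 / 6" by (simp add: coeffA_def funpow23 P2_def p_def fact_numeral)
  define A where "A = deriv w 0"
  define B where "B = deriv (deriv w) 0"
  have P1A: "P1 = 2 * A" by (simp add: A_def W1)
  have P2B: "P2 = 2 * B + 4 * A^2" by (simp add: B_def W2 P1A field_simps power2_eq_square)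
  have g1: "Gamma1 f = - A / 2" by (simp add: Gamma1_def c2 P1A)
  have g2: "Gamma2 f = - B / 6 + (5/12) * A^2"
    by (simp add: Gamma2_def c2 c3 P1A P2B field_simps power2_eq_square)
  have hA: "cmod A \<le> 1" using SC(2) A_def by simp
  have hB: "cmod B \<le> 2 * (1 - cmod A ^ 2)" using SC(1) A_def B_def by simp
  have "cmod (Gamma2 f) \<le> cmod B / 6 + (5/12) * cmod A ^ 2"
    unfolding g2 by (rule order_trans[OF norm_triangle_ineq]) (simp add: norm_mult norm_power norm_divide)
  also have "\<dots> \<le> 5/12"
  proof -
    have "cmod A ^ 2 \<le> 1" using hA by (simp add: power_le_one)
    then show ?thesis using hB by (simp add: field_simps)
  qed
  finally show ?thesis using hA by (simp add: g1 norm_divide)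
qed



definition Fx :: "complex \<Rightarrow> complex" where "Fx z = - z - 2 * Ln (1 - z)"

lemma Fx_facts: "Fx \<in> classR \<and> coeffA Fx 2 = 1 \<and> coeffA Fx 3 = 2/3"
proof -
  have nr: "1 - z \<notin> \<real>\<^sub>\<le>\<^sub>0" if "z \<in> ball 0 1" for z :: complex
  proof
    assume "1 - z \<in> \<real>\<^sub>\<le>\<^sub>0"
    then obtain r where r: "1 - z = of_real r" "r \<le> 0" by (rule nonpos_Reals_cases)
    then have "Re (1 - z) = r" by simp
    then have "Re (1 - z) \<le> 0" using r by simp
    moreover have "Re z < 1" using that complex_Re_le_cmod[of z] by simp
    ultimately show False by simp
  qed
  have ne: "1 - z \<noteq> 0" if "z \<in> ball 0 1" for z :: complex
    using nr[OF that] by auto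
  have dF: "(Fx has_field_derivative (-1 + 2 / (1 - z))) (at z)" if "z \<in> ball 0 1" for z
    unfolding Fx_def
    by (auto intro!: derivative_eq_intros nr[OF that] ne[OF that] simp: field_simps)
  have hol: "Fx holomorphic_on ball 0 1"
    using dF holomorphic_on_open open_ball by blast
  have d1: "deriv Fx z = -1 + 2 / (1 - z)" if "z \<in> ball 0 1" for z
    using DERIV_imp_deriv[OF dF[OF that]] .
  have d2: "deriv (deriv Fx) z = 2 / (1 - z)^2" if "z \<in> ball 0 1" for z
  proof -
    have "deriv (deriv Fx) z = deriv (\<lambda>z. -1 + 2 / (1 - z)) z"
      by (rule deriv_cong_ev[OF ev_ball[OF that]]) (auto simp: d1)
    also have "\<dots> = 2 / (1 - z)^2"
      by (rule DERIV_imp_deriv) (auto intro!: derivative_eq_intros ne[OF that] simp: field_simps power2_eq_square)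
    finally show ?thesis .
  qed
  have d3: "deriv (deriv (deriv Fx)) 0 = 4"
  proof -
    have "deriv (deriv (deriv Fx)) 0 = deriv (\<lambda>z. 2 / (1 - z)^2) 0"
      by (rule deriv_cong_ev[OF ev_ball]) (auto simp: d2)
    also have "\<dots> = 4"
      by (rule DERIV_imp_deriv) (auto intro!: derivative_eq_intros)
    finally show ?thesis .
  qed
  have re: "Re (deriv Fx z) > 0" if "z \<in> ball 0 1" for z
  proof -
    have n: "(Re z)^2 + (Im z)^2 < 1" using that by (simp add: cmod_power2[symmetric] power_less_one_iff abs_less_iff)
    have "cmod (1 - z) > 0" using ne[OF that] by simp
    then have "cmod (1 - z) ^ 2 > 0" by simp
    then have pos: "(1 - Re z)^2 + (Im z)^2 > 0" unfolding cmod_power2 by simp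
    have "Re (deriv Fx z) = -1 + 2 * (1 - Re z) / ((1 - Re z)^2 + (Im z)^2)"
      by (simp add: d1[OF that] Re_divide)
    also have "\<dots> > 0" using n pos by (simp add: field_simps power2_eq_square)
    finally show ?thesis .
  qed
  have F0: "Fx 0 = 0" by (simp add: Fx_def)
  have "deriv Fx 0 = 1" using d1[of 0] by simp
  then have "Fx \<in> classR" using hol F0 re by (simp add: classR_def classA_def)
  moreover have "coeffA Fx 2 = 1" using d2[of 0] by (simp add: coeffA_def funpow23)
  moreover have "coeffA Fx 3 = 2/3" using d3 by (simp add: coeffA_def funpow23 fact_numeral)
  ultimately show ?thesis by simp
qed

theorem mainTheorem6:
  shows "(\<forall>f \<in> classR. cmod (Gamma1 f) \<le> 1/2 \<and> cmod (Gamma2 f) \<le> 5/12)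
       \<and> (\<exists>f \<in> classR. cmod (Gamma1 f) = 1/2)
       \<and> (\<exists>f \<in> classR. cmod (Gamma2 f) = 5/12)"
proof -
  have c2: "coeffA Fx 2 = 1" and c3: "coeffA Fx 3 = 2/3" using Fx_facts by simp_all
  have g2: "Gamma2 Fx = 5/12" unfolding Gamma2_def c2 c3 by simp
  have g1: "Gamma1 Fx = -1/2" unfolding Gamma1_def c2 by simp
  have "cmod (Gamma1 Fx) = 1/2" unfolding g1 by (simp add: norm_divide)
  moreover have "cmod (Gamma2 Fx) = 5/12" unfolding g2 by (simp add: norm_divide)
  ultimately have "cmod (Gamma1 Fx) = 1/2" "cmod (Gamma2 Fx) = 5/12" by simp_all
  then show ?thesis using Fx_facts upper by blast
qed

end
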